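(* Let $r,t,\ell,m$ be integers with $1 \le r \le \ell \le m$ and $1 \le t < \ell$. Then $$\hat{\mathfrak w}_r(t;\ell,m) = A(r,t)-A(r,t-1)+ q^{m-1}\mu_{t-1}(\ell-1,m),$$ where for $0\le s<\ell$, $$A(r,s):=q^{s}\, \hat{\mathfrak w}_{r-1}(s;\ell-1,m-1)+q^{s-1}\bigl(\mu_s(\ell-1, m)-\mu_s(\ell-1,m-1)\bigr).$$
   Context: $q$ is a prime power. For nonnegative integers $a,b,t$, $\mu_t(a,b)$ denotes the number of $a\times b$ matrices over $\mathbb{F}_q$ of rank exactly $t$ (so $\mu_0(a,b)=1$ and $\mu_t(a,b)=0$ if $t>\min(a,b)$). For an $a\times b$ matrix $M=(m_{ij})$ and $0\le r\le a$, $\tau_r(M)=m_{11}+\cdots+m_{rr}$, with $\tau_0=0$. For $0\le r\le a$ and $t\ge 0$, $\mathfrak w_r(t;a,b)$ is the number of $a\times b$ matrices $M$ over $\mathbb{F}_q$ of rank exactly $t$ with $\tau_r(M)\ne 0$ (so $\mathfrak w_0(t;a,b)=0$ and $\mathfrak w_r(0;a,b)=0$), and $\hat{\mathfrak w}_r(t;a,b)=\mathfrak w_r(t;a,b)/(q-1)$. *)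

theory Defs
  imports "Jordan_Normal_Form.DL_Rank"
begin

text \<open>The finite field F_q is modelled by a finite field type 'a; q = card (UNIV :: 'a set).\<close>

definition mu :: "'a::{field,finite} itself \<Rightarrow> nat \<Rightarrow> nat \<Rightarrow> nat \<Rightarrow> nat" where
  "mu ty t a b = card {M :: 'a mat. M \<in> carrier_mat a b \<and> vec_space.rank a M = t}"

definition tau :: "nat \<Rightarrow> 'a::field mat \<Rightarrow> 'a" where
  "tau r M = (\<Sum>i<r. M $$ (i, i))"

definition frak_w :: "'a::{field,finite} itself \<Rightarrow> nat \<Rightarrow> nat \<Rightarrow> nat \<Rightarrow> nat \<Rightarrow> nat" where
  "frak_w ty r t a b = card {M :: 'a mat. M \<in> carrier_mat a b \<and> vec_space.rank a M = t \<and> tau r M \<noteq> 0}"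

definition hat_w :: "'a::{field,finite} itself \<Rightarrow> nat \<Rightarrow> nat \<Rightarrow> nat \<Rightarrow> nat \<Rightarrow> real" where
  "hat_w ty r t a b = real (frak_w ty r t a b) / (real (card (UNIV :: 'a set)) - 1)"

definition A_term :: "'a::{field,finite} itself \<Rightarrow> nat \<Rightarrow> nat \<Rightarrow> nat \<Rightarrow> nat \<Rightarrow> real" where
  "A_term ty l m r s =
     real (card (UNIV :: 'a set)) ^ s * hat_w ty (r - 1) s (l - 1) (m - 1)
     + real (card (UNIV :: 'a set)) powi (int s - 1) * (real (mu ty s (l - 1) m) - real (mu ty s (l - 1) (m - 1)))"

end

theory Submission
  imports Defs
begin

context vec_space begin
lemma span_Cons_eq:
  assumes ws: "set ws \<subseteq> carrier_vec n" and c: "c \<in> carrier_vec n"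
  shows "span (set (c#ws)) = (\<lambda>(a,y). a \<cdot>\<^sub>v c + y) ` (UNIV \<times> span (set ws))"
proof -
  have cv: "set (c#ws) \<subseteq> carrier_vec n" using ws c by auto
  have "span (set (c#ws)) = span_list (c#ws)" using span_list_as_span[OF cv] by simp
  also have "\<dots> = {a \<cdot>\<^sub>v c + y | a y. y \<in> span_list ws}"
  proof (intro equalityI subsetI)
    fix x assume "x \<in> span_list (c#ws)"
    then obtain f where "x = lincomb_list f (c#ws)" by (auto simp: span_list_def)
    then have "x = f 0 \<cdot>\<^sub>v c + lincomb_list (f o Suc) ws" by simp
    moreover have "lincomb_list (f o Suc) ws \<in> span_list ws" by (auto simp: span_list_def)
    ultimately show "x \<in> {a \<cdot>\<^sub>v c + y | a y. y \<in> span_list ws}" by blast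
  next
    fix x assume "x \<in> {a \<cdot>\<^sub>v c + y | a y. y \<in> span_list ws}"
    then obtain a g where x: "x = a \<cdot>\<^sub>v c + lincomb_list g ws" by (auto simp: span_list_def)
    define f where "f = (\<lambda>i. if i = 0 then a else g (i - 1))"
    have "f o Suc = g" by (auto simp: f_def)
    then have "lincomb_list f (c#ws) = x" using x by (simp add: f_def)
    then show "x \<in> span_list (c#ws)" by (auto simp: span_list_def)
  qed
  also have "\<dots> = {a \<cdot>\<^sub>v c + y | a y. y \<in> span (set ws)}" using span_list_as_span[OF ws] by simp
  also have "\<dots> = (\<lambda>(a,y). a \<cdot>\<^sub>v c + y) ` (UNIV \<times> span (set ws))" by force
  finally show ?thesis .
qed
end

locale fvec_space = vec_space f_ty n for f_ty :: "'a::{field,finite} itself" and n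
begin

lemma span_Cons_in:
  assumes ws: "set ws \<subseteq> carrier_vec n" and c: "c \<in> span (set ws)"
  shows "span (set (c#ws)) = span (set ws)"
proof -
  have "set (c#ws) = set ws \<union> {c}" by auto
  then show ?thesis using already_in_span[OF ws c] by simp
qed

lemma card_span_Cons:
  assumes ws: "set ws \<subseteq> carrier_vec n" and c: "c \<in> carrier_vec n" and nc: "c \<notin> span (set ws)"
  shows "card (span (set (c#ws))) = card (UNIV :: 'a set) * card (span (set ws))"
proof -
  let ?S = "span (set ws)"
  have Sc: "?S \<subseteq> carrier_vec n" using span_is_subset2[OF ws] by auto
  have eq: "span (set (c#ws)) = (\<lambda>(a,y). a \<cdot>\<^sub>v c + y) ` (UNIV \<times> ?S)"
    by (rule span_Cons_eq[OF ws c])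
  have inj: "inj_on (\<lambda>(a,y). a \<cdot>\<^sub>v c + y) (UNIV \<times> ?S)"
  proof (rule inj_onI, clarify)
    fix a y b z assume y: "y \<in> ?S" and z: "z \<in> ?S" and e: "a \<cdot>\<^sub>v c + y = b \<cdot>\<^sub>v c + z"
    have yc: "y \<in> carrier_vec n" "z \<in> carrier_vec n" using y z Sc by auto
    have ab: "a = b"
    proof (rule ccontr)
      assume "a \<noteq> b"
      have "(a - b) \<cdot>\<^sub>v c = z - y"
      proof (rule eq_vecI)
        fix i assume i: "i < dim_vec (z - y)"
        then have i': "i < n" using yc by simp
        have "(a \<cdot>\<^sub>v c + y) $ i = (b \<cdot>\<^sub>v c + z) $ i" using e by simp
        then have "a * c $ i + y $ i = b * c $ i + z $ i" using i' c yc by simp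
        then show "((a - b) \<cdot>\<^sub>v c) $ i = (z - y) $ i" using i' c yc by (simp add: algebra_simps)
      qed (use c yc in simp)
      moreover have "z - y \<in> ?S"
      proof -
        have my: "- y = (-1) \<cdot>\<^sub>v y" using yc by (intro eq_vecI) auto
        have "- y \<in> ?S" unfolding my by (rule smult_in_span[OF ws y])
        then have "z + - y \<in> ?S" using span_add1[OF ws z] by simp
        then show ?thesis using yc by (simp add: minus_add_uminus_vec)
      qed
      ultimately have "(a - b) \<cdot>\<^sub>v c \<in> ?S" by simp
      then have "inverse (a - b) \<cdot>\<^sub>v ((a - b) \<cdot>\<^sub>v c) \<in> ?S" by (rule smult_in_span[OF ws])
      then have "c \<in> ?S" using \<open>a \<noteq> b\<close> by (simp add: smult_smult_assoc)
      then show False using nc by simp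
    qed
    have "y = z"
    proof (rule eq_vecI)
      fix i assume i: "i < dim_vec z"
      then have i': "i < n" using yc by simp
      have "(a \<cdot>\<^sub>v c + y) $ i = (b \<cdot>\<^sub>v c + z) $ i" using e by simp
      then show "y $ i = z $ i" using i' c yc ab by simp
    qed (use yc in simp)
    then show "a = b \<and> y = z" using ab by simp
  qed
  have "card (span (set (c#ws))) = card ((UNIV :: 'a set) \<times> ?S)" unfolding eq using inj by (rule card_image)
  also have "\<dots> = card (UNIV :: 'a set) * card ?S" by (rule card_cartesian_product)
  finally show ?thesis .
qed

end

context fvec_space begin

definition rk :: "'a vec set \<Rightarrow> nat" where
  "rk S = vectorspace.dim class_ring (span_vs S)"

lemma li_insert_iff:
  assumes "U \<subseteq> carrier_vec n" "lin_indpt U" "v \<in> carrier_vec n" "v \<notin> U"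
  shows "lin_indpt (insert v U) \<longleftrightarrow> v \<notin> span U"
proof -
  have "insert v U = U \<union> {v}" by auto
  then show ?thesis using lin_dep_iff_in_span[OF assms(1,2) _ assms(4)] assms(3) by simp
qed

lemma rk_Cons:
  assumes ws: "set ws \<subseteq> carrier_vec n" and c: "c \<in> carrier_vec n" and nc: "c \<notin> span (set ws)"
  shows "rk (set (c#ws)) = rk (set ws) + 1"
proof -
  let ?S = "set ws"
  obtain U where U: "maximal U (\<lambda>T. T \<subseteq> ?S \<and> lin_indpt T)"
    using maximal_exists[of "(\<lambda>T. T \<subseteq> ?S \<and> lin_indpt T)" "card ?S" "{}"]
    by (meson List.finite_set card_mono empty_iff empty_subsetI finite_lin_indpt2 rev_finite_subset)
  have US: "U \<subseteq> ?S" and Ui: "lin_indpt U" using U by (auto simp: maximal_def)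
  have Uc: "U \<subseteq> carrier_vec n" using US ws by auto
  have spanU: "span U \<subseteq> span ?S" using span_is_monotone[OF US] .
  have cU: "c \<notin> U" using nc US in_own_span[OF ws] by auto
  have cspanU: "c \<notin> span U" using nc spanU by auto
  have indc: "lin_indpt (insert c U)"
    using li_insert_iff[OF Uc Ui c cU] cspanU by simp
  have Sin: "x \<in> span U" if x: "x \<in> ?S" for x
  proof (rule ccontr)
    assume xn: "x \<notin> span U"
    have xc: "x \<in> carrier_vec n" using x ws by auto
    have xU: "x \<notin> U" using xn in_own_span[OF Uc] by auto
    have "lin_indpt (insert x U)"
      using li_insert_iff[OF Uc Ui xc xU] xn by simp
    moreover have "insert x U \<subseteq> ?S" using x US by auto
    ultimately have "insert x U = U" using U unfolding maximal_def by blast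
    then show False using xU by auto
  qed
  have U2: "maximal (insert c U) (\<lambda>T. T \<subseteq> set (c#ws) \<and> lin_indpt T)"
    unfolding maximal_def
  proof (intro conjI allI impI)
    show "insert c U \<subseteq> set (c # ws)" using US by auto
    show "lin_indpt (insert c U)" by (rule indc)
    fix B assume B: "insert c U \<subseteq> B \<and> B \<subseteq> set (c # ws) \<and> lin_indpt B"
    show "B = insert c U"
    proof (rule ccontr)
      assume "B \<noteq> insert c U"
      then obtain x where xB: "x \<in> B" and xn: "x \<notin> insert c U" using B by auto
      have xS: "x \<in> ?S" using B xB xn by auto
      have xc: "x \<in> carrier_vec n" using xS ws by auto
      have "lin_indpt (insert x U)"
        using subset_li_is_li[of B "insert x U"] B xB by auto
      moreover have "x \<in> span U" using Sin[OF xS] .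
      ultimately show False
        using li_insert_iff[OF Uc Ui xc] xn by simp
    qed
  qed
  have cw: "set (c#ws) \<subseteq> carrier_vec n" using ws c by auto
  have "rk (set (c#ws)) = card (insert c U)" unfolding rk_def
    using dim_span[OF _ _ U2] cw by simp
  moreover have "rk ?S = card U" unfolding rk_def using dim_span[OF _ _ U] ws by simp
  moreover have "finite U" using US finite_subset by blast
  ultimately show ?thesis using cU by simp
qed

lemma rk_Cons_in:
  assumes ws: "set ws \<subseteq> carrier_vec n" and c: "c \<in> span (set ws)"
  shows "rk (set (c#ws)) = rk (set ws)"
  unfolding rk_def using span_Cons_in[OF ws c] by simp

lemma span_Nil: "span {} = {0\<^sub>v n}"
  using span_empty by simp

lemma rk_Nil: "rk {} = 0" unfolding rk_def by (rule dim_zero_vs)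

lemma card_span_rk:
  assumes ws: "set ws \<subseteq> carrier_vec n"
  shows "card (span (set ws)) = card (UNIV :: 'a set) ^ rk (set ws)"
  using ws
proof (induct ws)
  case Nil
  then show ?case using span_Nil rk_Nil by simp
next
  case (Cons c ws)
  then have ws: "set ws \<subseteq> carrier_vec n" and c: "c \<in> carrier_vec n" by auto
  show ?case
  proof (cases "c \<in> span (set ws)")
    case True
    then show ?thesis using Cons(1)[OF ws] span_Cons_in[OF ws True] rk_Cons_in[OF ws True] by simp
  next
    case False
    then show ?thesis using Cons(1)[OF ws] card_span_Cons[OF ws c False] rk_Cons[OF ws c False] by simp
  qed
qed

end

definition vres :: "nat \<Rightarrow> 'a vec \<Rightarrow> nat \<Rightarrow> 'a" where
  "vres n v = restrict (\<lambda>i. v $ i) {..<n}"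

lemma bij_vres: "bij_betw (vres n) (carrier_vec n) (PiE {..<n} (\<lambda>_. UNIV))"
proof (rule bij_betwI[where g = "\<lambda>f. vec n f"])
  show "vres n \<in> carrier_vec n \<rightarrow> PiE {..<n} (\<lambda>_. UNIV)" by (auto simp: vres_def)
  show "(\<lambda>f. vec n f) \<in> PiE {..<n} (\<lambda>_. UNIV) \<rightarrow> carrier_vec n" by auto
  show "vec n (vres n x) = x" if "x \<in> carrier_vec n" for x
    using that by (intro eq_vecI) (auto simp: vres_def)
  show "vres n (vec n y) = y" if "y \<in> PiE {..<n} (\<lambda>_. UNIV)" for y
    using that by (auto simp: vres_def PiE_def extensional_def fun_eq_iff)
qed

lemma card_carrier_vec: "card (carrier_vec n :: 'a::finite vec set) = card (UNIV :: 'a set) ^ n"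
proof -
  have "card (carrier_vec n :: 'a vec set) = card (PiE {..<n} (\<lambda>_. UNIV :: 'a set))"
    using bij_betw_same_card[OF bij_vres] .
  also have "\<dots> = card (UNIV :: 'a set) ^ n" by (simp add: card_PiE)
  finally show ?thesis .
qed

lemma finite_carrier_vec: "finite (carrier_vec n :: 'a::finite vec set)"
proof -
  have "finite (PiE {..<n} (\<lambda>_. UNIV :: 'a set))" by (simp add: finite_PiE)
  then show ?thesis using bij_betw_finite[OF bij_vres] by blast
qed

lemma card_carrier_vec_fix0:
  assumes "n > 0"
  shows "card {c \<in> carrier_vec n. c $ 0 = (v::'a::finite)} = card (UNIV :: 'a set) ^ (n - 1)"
proof -
  have bij: "bij_betw (vres n) {c \<in> carrier_vec n. c $ 0 = v}
     (PiE {..<n} (\<lambda>i. if i = 0 then {v} else UNIV))"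
    using bij_vres[of n] assms unfolding bij_betw_def inj_on_def
    apply (auto simp: vres_def PiE_def Pi_def split: if_splits)
    apply (rule_tac x = "vec n x" in image_eqI)
     apply (auto simp: extensional_def fun_eq_iff split: if_splits)
    done
  have "card {c \<in> carrier_vec n. c $ 0 = v} = card (PiE {..<n} (\<lambda>i. if i = 0 then {v} else (UNIV :: 'a set)))"
    using bij_betw_same_card[OF bij] .
  also have "\<dots> = (\<Prod>i<n. card (if i = 0 then {v} else (UNIV :: 'a set)))" by (simp add: card_PiE)
  also have "\<dots> = card (UNIV :: 'a set) ^ (n - 1)"
  proof -
    obtain n' where n: "n = Suc n'" using assms by (cases n) auto
    show ?thesis unfolding n prod.lessThan_Suc_shift by simp
  qed
  finally show ?thesis .
qed

context fvec_space begin

lemma sp_carrier: "set ws \<subseteq> carrier_vec n \<Longrightarrow> span (set ws) \<subseteq> carrier_vec n"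
  using span_is_subset2 by auto

lemma sp_add: "set ws \<subseteq> carrier_vec n \<Longrightarrow> x \<in> span (set ws) \<Longrightarrow> y \<in> span (set ws) \<Longrightarrow> x + y \<in> span (set ws)"
  using span_add1 by simp

lemma sp_smult: "set ws \<subseteq> carrier_vec n \<Longrightarrow> x \<in> span (set ws) \<Longrightarrow> a \<cdot>\<^sub>v x \<in> span (set ws)"
  using smult_in_span by simp

lemma sp_row0_zero:
  assumes ws: "set ws \<subseteq> carrier_vec n" and n: "0 < n" and z: "\<forall>w\<in>set ws. w $ 0 = 0"
  shows "\<forall>y\<in>span (set ws). y $ 0 = 0"
  using ws z
proof (induct ws)
  case Nil
  then show ?case using span_Nil n by simp
next
  case (Cons c ws)
  then have ws: "set ws \<subseteq> carrier_vec n" and c: "c \<in> carrier_vec n" by auto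
  have IH: "\<forall>y\<in>span (set ws). y $ 0 = 0" using Cons by auto
  show ?case
  proof
    fix y assume "y \<in> span (set (c#ws))"
    then obtain a x where y: "y = a \<cdot>\<^sub>v c + x" and x: "x \<in> span (set ws)"
      unfolding span_Cons_eq[OF ws c] by auto
    have xc: "x \<in> carrier_vec n" using x sp_carrier[OF ws] by auto
    show "y $ 0 = 0" using y x IH c xc n Cons(3) by simp
  qed
qed

lemma fiber_card:
  assumes ws: "set ws \<subseteq> carrier_vec n" and n: "0 < n"
    and y0: "y0 \<in> span (set ws)" and y00: "y0 $ 0 \<noteq> 0"
  shows "card {c \<in> span (set ws). c $ 0 = v} * card (UNIV :: 'a set) = card (span (set ws))"
proof -
  let ?S = "span (set ws)"
  let ?K = "{c \<in> ?S. c $ 0 = 0}"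
  define e where "e = inverse (y0 $ 0) \<cdot>\<^sub>v y0"
  have Sc: "?S \<subseteq> carrier_vec n" by (rule sp_carrier[OF ws])
  have fS: "finite ?S" using finite_subset[OF Sc finite_carrier_vec] .
  have eS: "e \<in> ?S" unfolding e_def by (rule sp_smult[OF ws y0])
  have ec: "e \<in> carrier_vec n" using eS Sc by auto
  have e0: "e $ 0 = 1" using y00 y0 Sc n by (auto simp: e_def)
  have fib: "card {c \<in> ?S. c $ 0 = u} = card ?K" for u
  proof -
    have "bij_betw (\<lambda>c. c + (-u) \<cdot>\<^sub>v e) {c \<in> ?S. c $ 0 = u} ?K"
    proof (rule bij_betwI[where g = "\<lambda>c. c + u \<cdot>\<^sub>v e"])
      show "(\<lambda>c. c + (-u) \<cdot>\<^sub>v e) \<in> {c \<in> ?S. c $ 0 = u} \<rightarrow> ?K"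
      proof
        fix c assume c: "c \<in> {c \<in> ?S. c $ 0 = u}"
        have cc: "c \<in> carrier_vec n" using c Sc by auto
        have "c + (-u) \<cdot>\<^sub>v e \<in> ?S" using c sp_add[OF ws] sp_smult[OF ws eS] by auto
        moreover have "(c + (-u) \<cdot>\<^sub>v e) $ 0 = 0" using c cc ec e0 n by simp
        ultimately show "c + (-u) \<cdot>\<^sub>v e \<in> ?K" by simp
      qed
      show "(\<lambda>c. c + u \<cdot>\<^sub>v e) \<in> ?K \<rightarrow> {c \<in> ?S. c $ 0 = u}"
      proof
        fix c assume c: "c \<in> ?K"
        have cc: "c \<in> carrier_vec n" using c Sc by auto
        have "c + u \<cdot>\<^sub>v e \<in> ?S" using c sp_add[OF ws] sp_smult[OF ws eS] by auto
        moreover have "(c + u \<cdot>\<^sub>v e) $ 0 = u" using c cc ec e0 n by simp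
        ultimately show "c + u \<cdot>\<^sub>v e \<in> {c \<in> ?S. c $ 0 = u}" by simp
      qed
      show "c + (-u) \<cdot>\<^sub>v e + u \<cdot>\<^sub>v e = c" if "c \<in> {c \<in> ?S. c $ 0 = u}" for c
      proof -
        have cc: "c \<in> carrier_vec n" using that Sc by auto
        show ?thesis using cc ec by (intro eq_vecI) auto
      qed
      show "c + u \<cdot>\<^sub>v e + (-u) \<cdot>\<^sub>v e = c" if "c \<in> ?K" for c
      proof -
        have cc: "c \<in> carrier_vec n" using that Sc by auto
        show ?thesis using cc ec by (intro eq_vecI) auto
      qed
    qed
    then show ?thesis by (rule bij_betw_same_card)
  qed
  have "card ?S = (\<Sum>u\<in>(UNIV :: 'a set). card {c \<in> ?S. c $ 0 = u})"
    using sum.group[OF fS finite_UNIV, of "\<lambda>c. c $ 0" "\<lambda>_. 1::nat"] by simp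
  also have "\<dots> = (\<Sum>u\<in>(UNIV :: 'a set). card ?K)" by (rule sum.cong[OF refl fib])
  also have "\<dots> = card (UNIV :: 'a set) * card ?K" by simp
  finally show ?thesis unfolding fib[of v] by simp
qed

end

definition joinc :: "'a vec \<Rightarrow> 'a mat \<Rightarrow> 'a mat" where
  "joinc c A = mat (dim_row A) (Suc (dim_col A)) (\<lambda>(i,j). if j = 0 then c $ i else A $$ (i, j - 1))"

definition dropc :: "'a mat \<Rightarrow> 'a mat" where
  "dropc M = mat (dim_row M) (dim_col M - 1) (\<lambda>(i,j). M $$ (i, Suc j))"

lemma joinc_carrier: "A \<in> carrier_mat n k \<Longrightarrow> joinc c A \<in> carrier_mat n (Suc k)"
  by (auto simp: joinc_def)

lemma cols_joinc:
  assumes A: "A \<in> carrier_mat n k" and c: "c \<in> carrier_vec n"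
  shows "cols (joinc c A) = c # cols A"
proof (rule nth_equalityI)
  show "length (cols (joinc c A)) = length (c # cols A)" using A by (simp add: joinc_def)
  fix j assume j: "j < length (cols (joinc c A))"
  then have j': "j < Suc k" using A by (simp add: joinc_def)
  show "cols (joinc c A) ! j = (c # cols A) ! j"
  proof (cases j)
    case 0
    then show ?thesis using A c j' by (intro eq_vecI) (auto simp: joinc_def)
  next
    case (Suc j1)
    then show ?thesis using A c j' by (intro eq_vecI) (auto simp: joinc_def)
  qed
qed

lemma bij_joinc:
  "bij_betw (\<lambda>(A,c). joinc c A) (SIGMA A:carrier_mat n k. carrier_vec n) (carrier_mat n (Suc k))"
proof (rule bij_betwI[where g = "\<lambda>M. (dropc M, col M 0)"])
  show "(\<lambda>(A,c). joinc c A) \<in> (SIGMA A:carrier_mat n k. carrier_vec n) \<rightarrow> carrier_mat n (Suc k)"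
    by (auto simp: joinc_carrier)
  show "(\<lambda>M. (dropc M, col M 0)) \<in> carrier_mat n (Suc k) \<rightarrow> (SIGMA A:carrier_mat n k. carrier_vec n)"
    by (auto simp: dropc_def)
  show "(\<lambda>M. (dropc M, col M 0)) ((\<lambda>(A,c). joinc c A) x) = x" if "x \<in> (SIGMA A:carrier_mat n k. carrier_vec n)" for x
  proof -
    obtain A c where x: "x = (A, c)" by (cases x)
    have A: "A \<in> carrier_mat n k" and c: "c \<in> carrier_vec n" using that x by auto
    have "dropc (joinc c A) = A" using A by (intro eq_matI) (auto simp: dropc_def joinc_def)
    moreover have "col (joinc c A) 0 = c" using A c by (intro eq_vecI) (auto simp: joinc_def)
    ultimately show ?thesis using x by simp
  qed
  show "(\<lambda>(A,c). joinc c A) ((\<lambda>M. (dropc M, col M 0)) M) = M" if "M \<in> carrier_mat n (Suc k)" for M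
    using that by (intro eq_matI) (auto simp: dropc_def joinc_def)
qed

lemma finite_carrier_mat: "finite (carrier_mat n k :: 'a::finite mat set)"
proof (induct k)
  case 0
  have "carrier_mat n 0 \<subseteq> {mat n 0 (\<lambda>_. undefined) :: 'a mat}" by (auto intro: eq_matI)
  then show ?case using finite_subset by blast
next
  case (Suc k)
  have "finite (SIGMA A:(carrier_mat n k :: 'a mat set). (carrier_vec n :: 'a vec set))"
    using Suc finite_carrier_vec by (intro finite_SigmaI) auto
  then show ?case using bij_betw_finite[OF bij_joinc] by blast
qed

lemma count_join:
  "card {M :: 'a::finite mat. M \<in> carrier_mat n (Suc k) \<and> P M}
     = (\<Sum>A\<in>carrier_mat n k. card {c \<in> carrier_vec n. P (joinc c A)})"
proof -
  let ?D = "SIGMA A:carrier_mat n k. {c \<in> carrier_vec n. P (joinc c A)}"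
  have sub: "?D \<subseteq> (SIGMA A:carrier_mat n k. carrier_vec n)" by auto
  have inj: "inj_on (\<lambda>(A,c). joinc c A) ?D"
    using inj_on_subset[OF conjunct1[OF bij_joinc[of n k, unfolded bij_betw_def]] sub] .
  have eq: "{M. M \<in> carrier_mat n (Suc k) \<and> P M} = (\<lambda>(A,c). joinc c A) ` ?D"
  proof
    show "(\<lambda>(A,c). joinc c A) ` ?D \<subseteq> {M. M \<in> carrier_mat n (Suc k) \<and> P M}"
      by (auto simp: joinc_carrier)
    show "{M. M \<in> carrier_mat n (Suc k) \<and> P M} \<subseteq> (\<lambda>(A,c). joinc c A) ` ?D"
    proof
      fix M assume M: "M \<in> {M. M \<in> carrier_mat n (Suc k) \<and> P M}"
      then obtain x where x: "x \<in> (SIGMA A:carrier_mat n k. carrier_vec n)" and Mx: "M = (\<lambda>(A,c). joinc c A) x"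
        using bij_joinc[of n k] unfolding bij_betw_def by blast
      then show "M \<in> (\<lambda>(A,c). joinc c A) ` ?D" using M by (auto intro!: image_eqI[of _ _ x])
    qed
  qed
  have "card {M. M \<in> carrier_mat n (Suc k) \<and> P M} = card ?D" unfolding eq by (rule card_image[OF inj])
  also have "\<dots> = (\<Sum>A\<in>carrier_mat n k. card {c \<in> carrier_vec n. P (joinc c A)})"
  proof (rule card_SigmaI)
    show "finite (carrier_mat n k :: 'a mat set)" by (rule finite_carrier_mat)
    show "\<forall>A\<in>carrier_mat n k. finite {c \<in> carrier_vec n. P (joinc c A)}"
      by (auto intro!: finite_subset[OF _ finite_carrier_vec])
  qed
  finally show ?thesis .
qed

context fvec_space begin

lemma rank_rk: "rank A = rk (set (cols A))" by (simp add: rank_def rk_def)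

lemma card_span_rank:
  assumes A: "A \<in> carrier_mat n k"
  shows "card (span (set (cols A))) = card (UNIV :: 'a set) ^ rank A"
  unfolding rank_rk by (rule card_span_rk) (use A cols_dim[of A] in auto)

lemma rank_joinc:
  assumes A: "A \<in> carrier_mat n k" and c: "c \<in> carrier_vec n"
  shows "rank (joinc c A) = rank A + (if c \<in> span (set (cols A)) then 0 else 1)"
proof -
  have ws: "set (cols A) \<subseteq> carrier_vec n" using A cols_dim[of A] by auto
  show ?thesis unfolding rank_rk cols_joinc[OF A c]
    using rk_Cons[OF ws c] rk_Cons_in[OF ws] by auto
qed

end

definition Sp :: "nat \<Rightarrow> 'a::field vec list \<Rightarrow> 'a vec set" where
  "Sp n ws = LinearCombinations.module.span class_ring (module_vec TYPE('a) n) (set ws)"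

context fvec_space begin
lemma Sp_span: "Sp n ws = span (set ws)" by (simp add: Sp_def)
end

lemma Sp_Nil: "Sp n [] = {0\<^sub>v n :: 'a::{field,finite} vec}"
  unfolding Sp_def using fvec_space.span_Nil[where 'a='a] by simp

lemma Sp_Cons:
  fixes c :: "'a::{field,finite} vec"
  assumes "set ws \<subseteq> carrier_vec n" "c \<in> carrier_vec n"
  shows "Sp n (c#ws) = (\<lambda>(a,y). a \<cdot>\<^sub>v c + y) ` (UNIV \<times> Sp n ws)"
  unfolding Sp_def using vec_space.span_Cons_eq[OF assms] by simp

lemma card_Sp_rank:
  fixes A :: "'a::{field,finite} mat"
  assumes "A \<in> carrier_mat n k"
  shows "card (Sp n (cols A)) = card (UNIV :: 'a set) ^ vec_space.rank n A"
  unfolding Sp_def using fvec_space.card_span_rank[OF assms] by simp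

lemma card_UNIV_ge2: "card (UNIV :: 'a::{field,finite} set) \<ge> 2"
proof -
  have "{0, 1} \<subseteq> (UNIV :: 'a set)" by auto
  then have "card {0, 1::'a} \<le> card (UNIV :: 'a set)" by (intro card_mono) auto
  then show ?thesis by simp
qed

definition vz :: "'a::zero vec \<Rightarrow> 'a vec" where
  "vz v = vec (Suc (dim_vec v)) (\<lambda>i. if i = 0 then 0 else v $ (i - 1))"

definition addz :: "'a::zero mat \<Rightarrow> 'a mat" where
  "addz N = mat (Suc (dim_row N)) (dim_col N) (\<lambda>(i,j). if i = 0 then 0 else N $$ (i - 1, j))"

definition dropr :: "'a mat \<Rightarrow> 'a mat" where
  "dropr A = mat (dim_row A - 1) (dim_col A) (\<lambda>(i,j). A $$ (Suc i, j))"

lemma vz_carrier: "v \<in> carrier_vec n \<Longrightarrow> vz v \<in> carrier_vec (Suc n)"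
  by (auto simp: vz_def)

lemma vz_lin:
  fixes c y :: "'a::field vec"
  assumes "c \<in> carrier_vec n" "y \<in> carrier_vec n"
  shows "vz (a \<cdot>\<^sub>v c + y) = a \<cdot>\<^sub>v vz c + vz y"
  using assms by (intro eq_vecI) (auto simp: vz_def)

lemma inj_vz: "inj_on vz (carrier_vec n)"
proof (rule inj_onI)
  fix x y :: "'a vec" assume x: "x \<in> carrier_vec n" and y: "y \<in> carrier_vec n" and e: "vz x = vz y"
  show "x = y"
  proof (rule eq_vecI)
    fix i assume "i < dim_vec y"
    then have "vz x $ Suc i = vz y $ Suc i" using e by simp
    then show "x $ i = y $ i" using x y \<open>i < dim_vec y\<close> by (simp add: vz_def)
  qed (use x y in simp)
qed

lemma Sp_map_vz:
  fixes ws :: "'a::{field,finite} vec list"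
  assumes "set ws \<subseteq> carrier_vec n"
  shows "Sp (Suc n) (map vz ws) = vz ` Sp n ws"
  using assms
proof (induct ws)
  case Nil
  have "vz (0\<^sub>v n :: 'a vec) = 0\<^sub>v (Suc n)" by (intro eq_vecI) (auto simp: vz_def)
  then show ?case by (simp add: Sp_Nil)
next
  case (Cons c ws)
  then have ws: "set ws \<subseteq> carrier_vec n" and c: "c \<in> carrier_vec n" by auto
  have ws': "set (map vz ws) \<subseteq> carrier_vec (Suc n)" using ws vz_carrier by auto
  have c': "vz c \<in> carrier_vec (Suc n)" using c vz_carrier by auto
  have SC: "Sp n ws \<subseteq> carrier_vec n"
    unfolding Sp_def using fvec_space.sp_carrier[OF ws] by simp
  have "Sp (Suc n) (map vz (c#ws)) = (\<lambda>(a,y). a \<cdot>\<^sub>v vz c + y) ` (UNIV \<times> vz ` Sp n ws)"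
    using Sp_Cons[OF ws' c'] Cons(1)[OF ws] by simp
  also have "\<dots> = vz ` ((\<lambda>(a,y). a \<cdot>\<^sub>v c + y) ` (UNIV \<times> Sp n ws))"
  proof -
    have "(\<lambda>(a,y). a \<cdot>\<^sub>v vz c + y) ` (UNIV \<times> vz ` Sp n ws)
        = (\<lambda>(a,y). a \<cdot>\<^sub>v vz c + vz y) ` (UNIV \<times> Sp n ws)" by force
    also have "\<dots> = (\<lambda>(a,y). vz (a \<cdot>\<^sub>v c + y)) ` (UNIV \<times> Sp n ws)"
      using vz_lin[OF c] SC by (intro image_cong) auto
    also have "\<dots> = vz ` ((\<lambda>(a,y). a \<cdot>\<^sub>v c + y) ` (UNIV \<times> Sp n ws))" by force
    finally show ?thesis .
  qed
  also have "\<dots> = vz ` Sp n (c#ws)" using Sp_Cons[OF ws c] by simp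
  finally show ?case .
qed

lemma cols_addz:
  assumes "N \<in> carrier_mat n k"
  shows "cols (addz N) = map vz (cols N)"
  using assms by (intro nth_equalityI) (auto intro!: eq_vecI simp: addz_def vz_def)

lemma rank_addz:
  fixes N :: "'a::{field,finite} mat"
  assumes N: "N \<in> carrier_mat n k"
  shows "vec_space.rank (Suc n) (addz N) = vec_space.rank n N"
proof -
  have A: "addz N \<in> carrier_mat (Suc n) k" using N by (auto simp: addz_def)
  have ws: "set (cols N) \<subseteq> carrier_vec n" using N cols_dim[of N] by auto
  have SC: "Sp n (cols N) \<subseteq> carrier_vec n"
    unfolding Sp_def using fvec_space.sp_carrier[OF ws] by simp
  have "card (Sp (Suc n) (cols (addz N))) = card (Sp n (cols N))"
    unfolding cols_addz[OF N] Sp_map_vz[OF ws]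
    using inj_on_subset[OF inj_vz SC] by (rule card_image)
  then have "card (UNIV :: 'a set) ^ vec_space.rank (Suc n) (addz N) = card (UNIV :: 'a set) ^ vec_space.rank n N"
    using card_Sp_rank[OF A] card_Sp_rank[OF N] by simp
  then show ?thesis using card_UNIV_ge2[where 'a='a] by (simp add: power_inject_exp)
qed

lemma addz_carrier: "N \<in> carrier_mat n k \<Longrightarrow> addz N \<in> carrier_mat (Suc n) k"
  by (auto simp: addz_def)

lemma bij_addz:
  "bij_betw addz (carrier_mat n k) {A \<in> carrier_mat (Suc n) k. \<forall>j<k. A $$ (0, j) = 0}"
proof (rule bij_betwI[where g = dropr])
  show "addz \<in> carrier_mat n k \<rightarrow> {A \<in> carrier_mat (Suc n) k. \<forall>j<k. A $$ (0, j) = 0}"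
    by (auto simp: addz_def)
  show "dropr \<in> {A \<in> carrier_mat (Suc n) k. \<forall>j<k. A $$ (0, j) = 0} \<rightarrow> carrier_mat n k"
    by (auto simp: dropr_def)
  show "dropr (addz x) = x" if "x \<in> carrier_mat n k" for x
    using that by (intro eq_matI) (auto simp: dropr_def addz_def)
  show "addz (dropr y) = y" if "y \<in> {A \<in> carrier_mat (Suc n) k. \<forall>j<k. A $$ (0, j) = 0}" for y
    using that by (intro eq_matI) (auto simp: dropr_def addz_def)
qed

context fvec_space begin
lemma sp_own: "set ws \<subseteq> carrier_vec n \<Longrightarrow> w \<in> set ws \<Longrightarrow> w \<in> span (set ws)"
  using in_own_span by auto
end

lemma Sp_own: "set ws \<subseteq> carrier_vec n \<Longrightarrow> w \<in> set ws \<Longrightarrow> w \<in> Sp n (ws :: 'a::{field,finite} vec list)"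
  unfolding Sp_def by (rule fvec_space.sp_own)

lemma Sp_carrier: "set ws \<subseteq> carrier_vec n \<Longrightarrow> Sp n (ws :: 'a::{field,finite} vec list) \<subseteq> carrier_vec n"
  unfolding Sp_def by (rule fvec_space.sp_carrier)

lemma cols_carrier: "A \<in> carrier_mat n k \<Longrightarrow> set (cols A) \<subseteq> carrier_vec n"
  using cols_dim[of A] by auto

lemma rank_joinc':
  fixes A :: "'a::{field,finite} mat"
  assumes "A \<in> carrier_mat n k" "c \<in> carrier_vec n"
  shows "vec_space.rank n (joinc c A) = vec_space.rank n A + (if c \<in> Sp n (cols A) then 0 else 1)"
  unfolding Sp_def using fvec_space.rank_joinc[OF assms] by simp

lemma NZ_fiber:
  fixes A :: "'a::{field,finite} mat"
  assumes A: "A \<in> carrier_mat n k" and n: "0 < n" and j: "j < k" and nz: "A $$ (0, j) \<noteq> 0"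
  shows "card {c \<in> Sp n (cols A). c $ 0 = v} * card (UNIV :: 'a set) = card (Sp n (cols A))"
proof -
  have ws: "set (cols A) \<subseteq> carrier_vec n" using cols_carrier[OF A] .
  have "col A j \<in> set (cols A)" using A j by (simp add: cols_def)
  then have y0: "col A j \<in> Sp n (cols A)" using Sp_own[OF ws] by auto
  have "col A j $ 0 \<noteq> 0" using A j nz n by simp
  then show ?thesis using fvec_space.fiber_card[OF ws n _ ] y0 unfolding Sp_def by simp
qed

lemma Z_fiber:
  fixes A :: "'a::{field,finite} mat"
  assumes A: "A \<in> carrier_mat n k" and n: "0 < n" and z: "\<forall>j<k. A $$ (0, j) = 0"
  shows "{c \<in> Sp n (cols A). c $ 0 = v} = (if v = 0 then Sp n (cols A) else {})"
proof -
  have ws: "set (cols A) \<subseteq> carrier_vec n" using cols_carrier[OF A] .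
  have "\<forall>w\<in>set (cols A). w $ 0 = 0" using A z n by (auto simp: cols_def)
  then have "\<forall>y\<in>Sp n (cols A). y $ 0 = 0" unfolding Sp_def using fvec_space.sp_row0_zero[OF ws n] by simp
  then show ?thesis by auto
qed

lemma fiber_main:
  fixes A :: "'a::{field,finite} mat"
  assumes A: "A \<in> carrier_mat n k" and n: "0 < n"
  defines "S \<equiv> Sp n (cols A)" and "s \<equiv> vec_space.rank n A" and "Q \<equiv> real (card (UNIV :: 'a set))"
  shows "real (card {c \<in> carrier_vec n. vec_space.rank n (joinc c A) = t \<and> c $ 0 \<noteq> u})
     = (if s = t then Q ^ s - real (card {c \<in> S. c $ 0 = u}) else 0)
     + (if s + 1 = t then Q ^ n - Q ^ s - Q ^ (n - 1) + real (card {c \<in> S. c $ 0 = u}) else 0)"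
proof -
  have ws: "set (cols A) \<subseteq> carrier_vec n" using cols_carrier[OF A] .
  have SC: "S \<subseteq> carrier_vec n" unfolding S_def by (rule Sp_carrier[OF ws])
  have fS: "finite S" using finite_subset[OF SC finite_carrier_vec] .
  have cS: "card S = card (UNIV :: 'a set) ^ s" unfolding S_def s_def by (rule card_Sp_rank[OF A])
  let ?E = "{c \<in> S. c $ 0 = u}"
  have fE: "finite ?E" using fS by simp
  have rk: "vec_space.rank n (joinc c A) = s + (if c \<in> S then 0 else 1)" if "c \<in> carrier_vec n" for c
    using rank_joinc'[OF A that] unfolding S_def s_def .
  have X1: "card {c \<in> S. c $ 0 \<noteq> u} = real (card S) - card ?E"
  proof -
    have "{c \<in> S. c $ 0 \<noteq> u} = S - ?E" by auto
    then show ?thesis using card_Diff_subset[OF fE] fS card_mono[OF fS, of ?E] by (auto simp: of_nat_diff)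
  qed
  have X2: "card {c \<in> carrier_vec n - S. c $ 0 \<noteq> u} = Q ^ n - Q ^ (n - 1) - (real (card S) - card ?E)"
  proof -
    let ?N = "{c \<in> carrier_vec n. c $ 0 \<noteq> u}"
    have fN: "finite ?N" by (rule finite_subset[OF _ finite_carrier_vec]) auto
    have cN: "real (card ?N) = Q ^ n - Q ^ (n - 1)"
    proof -
      have fU: "finite {c \<in> carrier_vec n. c $ 0 = u}" by (rule finite_subset[OF _ finite_carrier_vec]) auto
      have "?N = carrier_vec n - {c \<in> carrier_vec n. c $ 0 = u}" by auto
      then have "card ?N = card (carrier_vec n :: 'a vec set) - card {c \<in> carrier_vec n. c $ 0 = u}"
        using card_Diff_subset[OF fU] by auto
      moreover have "card {c \<in> carrier_vec n. c $ 0 = u} \<le> card (carrier_vec n :: 'a vec set)"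
        by (rule card_mono[OF finite_carrier_vec]) auto
      ultimately show ?thesis unfolding Q_def using card_carrier_vec[where 'a='a] card_carrier_vec_fix0[OF n]
        by (simp add: of_nat_diff)
    qed
    have sub: "{c \<in> S. c $ 0 \<noteq> u} \<subseteq> ?N" using SC by auto
    have "{c \<in> carrier_vec n - S. c $ 0 \<noteq> u} = ?N - {c \<in> S. c $ 0 \<noteq> u}" using SC by auto
    then have "card {c \<in> carrier_vec n - S. c $ 0 \<noteq> u} = card ?N - card {c \<in> S. c $ 0 \<noteq> u}"
      using card_Diff_subset[OF _ sub] fS by auto
    moreover have "card {c \<in> S. c $ 0 \<noteq> u} \<le> card ?N" by (rule card_mono[OF fN sub])
    ultimately show ?thesis using cN X1 by (simp add: of_nat_diff)
  qed
  show ?thesis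
  proof (cases "s = t")
    case True
    have iff: "c \<in> carrier_vec n \<Longrightarrow> (vec_space.rank n (joinc c A) = t) = (c \<in> S)" for c
      using rk[of c] True by simp
    have "{c \<in> carrier_vec n. vec_space.rank n (joinc c A) = t \<and> c $ 0 \<noteq> u} = {c \<in> S. c $ 0 \<noteq> u}"
      using iff SC by blast
    then have "real (card {c \<in> carrier_vec n. vec_space.rank n (joinc c A) = t \<and> c $ 0 \<noteq> u})
       = Q ^ s - real (card {c \<in> S. c $ 0 = u})" using X1 cS unfolding Q_def by simp
    then show ?thesis using True by simp
  next
    case False
    show ?thesis
    proof (cases "s + 1 = t")
      case True
      then have "{c \<in> carrier_vec n. vec_space.rank n (joinc c A) = t \<and> c $ 0 \<noteq> u} = {c \<in> carrier_vec n - S. c $ 0 \<noteq> u}"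
        using rk SC by auto
      then show ?thesis using X2 True False cS Q_def by simp
    next
      case False2: False
      have ne: "c \<in> carrier_vec n \<Longrightarrow> vec_space.rank n (joinc c A) \<noteq> t" for c
        using rk[of c] False False2 by (auto split: if_splits)
      then have eq: "{c \<in> carrier_vec n. vec_space.rank n (joinc c A) = t \<and> c $ 0 \<noteq> u} = {}"
        by blast
      show ?thesis unfolding eq using False False2 by simp
    qed
  qed
qed

lemma fiber_mu:
  fixes A :: "'a::{field,finite} mat"
  assumes A: "A \<in> carrier_mat n k"
  defines "s \<equiv> vec_space.rank n A" and "Q \<equiv> real (card (UNIV :: 'a set))"
  shows "real (card {c \<in> carrier_vec n. vec_space.rank n (joinc c A) = t})
     = (if s = t then Q ^ s else 0) + (if s + 1 = t then Q ^ n - Q ^ s else 0)"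
proof -
  let ?S = "Sp n (cols A)"
  have ws: "set (cols A) \<subseteq> carrier_vec n" using cols_carrier[OF A] .
  have SC: "?S \<subseteq> carrier_vec n" by (rule Sp_carrier[OF ws])
  have fS: "finite ?S" using finite_subset[OF SC finite_carrier_vec] .
  have cS: "card ?S = card (UNIV :: 'a set) ^ s" unfolding s_def by (rule card_Sp_rank[OF A])
  have rk: "vec_space.rank n (joinc c A) = s + (if c \<in> ?S then 0 else 1)" if "c \<in> carrier_vec n" for c
    using rank_joinc'[OF A that] unfolding s_def .
  show ?thesis
  proof (cases "s = t")
    case True
    have iff: "c \<in> carrier_vec n \<Longrightarrow> (vec_space.rank n (joinc c A) = t) = (c \<in> ?S)" for c
      using rk[of c] True by simp
    have "{c \<in> carrier_vec n. vec_space.rank n (joinc c A) = t} = ?S"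
      using iff SC by blast
    then have "real (card {c \<in> carrier_vec n. vec_space.rank n (joinc c A) = t}) = Q ^ s"
      using cS unfolding Q_def by simp
    then show ?thesis using True by simp
  next
    case False
    show ?thesis
    proof (cases "s + 1 = t")
      case True
      have iff: "c \<in> carrier_vec n \<Longrightarrow> (vec_space.rank n (joinc c A) = t) = (c \<notin> ?S)" for c
        using rk[of c] True by simp
      have "{c \<in> carrier_vec n. vec_space.rank n (joinc c A) = t} = carrier_vec n - ?S"
        using iff by blast
      then have "card {c \<in> carrier_vec n. vec_space.rank n (joinc c A) = t} = card (carrier_vec n :: 'a vec set) - card ?S"
        using card_Diff_subset[OF fS SC] by simp
      moreover have "card ?S \<le> card (carrier_vec n :: 'a vec set)" by (rule card_mono[OF finite_carrier_vec SC])
      ultimately have "real (card {c \<in> carrier_vec n. vec_space.rank n (joinc c A) = t}) = Q ^ n - Q ^ s"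
        using cS card_carrier_vec[where 'a='a] unfolding Q_def by (simp add: of_nat_diff)
      then show ?thesis using True False by simp
    next
      case False2: False
      have ne: "c \<in> carrier_vec n \<Longrightarrow> vec_space.rank n (joinc c A) \<noteq> t" for c
        using rk[of c] False False2 by (auto split: if_splits)
      then have eq: "{c \<in> carrier_vec n. vec_space.rank n (joinc c A) = t} = {}"
        by blast
      show ?thesis unfolding eq using False False2 by simp
    qed
  qed
qed

lemma sum_if_card:
  assumes "finite C"
  shows "(\<Sum>x\<in>C. if P x then (c::real) else 0) = real (card {x\<in>C. P x}) * c"
proof -
  have "(\<Sum>x\<in>C. if P x then c else 0) = (\<Sum>x\<in>{x\<in>C. P x}. c)"
    using sum.inter_filter[OF assms, of "\<lambda>_. c" P] by simp
  also have "\<dots> = real (card {x\<in>C. P x}) * c" by simp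
  finally show ?thesis .
qed

lemma count_Z:
  fixes R :: "'a::{field,finite} mat \<Rightarrow> bool"
  shows "card {A \<in> carrier_mat (Suc n) k. (\<forall>j<k. A $$ (0, j) = 0) \<and> vec_space.rank (Suc n) A = s \<and> R A}
       = card {N \<in> carrier_mat n k. vec_space.rank n N = s \<and> R (addz N)}"
proof -
  let ?L = "{A \<in> carrier_mat (Suc n) k. (\<forall>j<k. A $$ (0, j) = 0) \<and> vec_space.rank (Suc n) A = s \<and> R A}"
  let ?R = "{N \<in> carrier_mat n k. vec_space.rank n N = s \<and> R (addz N)}"
  have bij: "bij_betw addz (carrier_mat n k :: 'a mat set) {A \<in> carrier_mat (Suc n) k. \<forall>j<k. A $$ (0, j) = 0}"
    by (rule bij_addz)
  have inj: "inj_on addz ?R" using inj_on_subset[OF conjunct1[OF bij[unfolded bij_betw_def]]] by auto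
  have "?L = addz ` ?R"
  proof
    show "addz ` ?R \<subseteq> ?L"
    proof
      fix A assume "A \<in> addz ` ?R"
      then obtain N where N: "N \<in> ?R" and A: "A = addz N" by auto
      have "A \<in> {A \<in> carrier_mat (Suc n) k. \<forall>j<k. A $$ (0, j) = 0}"
        using bij N A unfolding bij_betw_def by auto
      moreover have "vec_space.rank (Suc n) A = s" using N A rank_addz[of N n k] by auto
      ultimately show "A \<in> ?L" using N A by auto
    qed
    show "?L \<subseteq> addz ` ?R"
    proof
      fix A assume AL: "A \<in> ?L"
      then have "A \<in> {A \<in> carrier_mat (Suc n) k. \<forall>j<k. A $$ (0, j) = 0}" by auto
      then have "A \<in> addz ` carrier_mat n k" using bij unfolding bij_betw_def by simp
      then obtain N where N: "N \<in> carrier_mat n k" and A: "A = addz N" by (rule imageE) auto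
      have "vec_space.rank n N = s" using AL A rank_addz[OF N] by auto
      then show "A \<in> addz ` ?R" using N A AL by auto
    qed
  qed
  then show ?thesis using card_image[OF inj] by simp
qed

lemma count_split:
  fixes R :: "'a::{field,finite} mat \<Rightarrow> bool"
  shows "card {A \<in> carrier_mat n k. R A}
     = card {A \<in> carrier_mat n k. (\<forall>j<k. A $$ (0, j) = 0) \<and> R A}
     + card {A \<in> carrier_mat n k. \<not> (\<forall>j<k. A $$ (0, j) = 0) \<and> R A}"
proof -
  have f: "finite {A \<in> carrier_mat n k. R A}" by (rule finite_subset[OF _ finite_carrier_mat]) auto
  have "{A \<in> carrier_mat n k. R A} = {A \<in> carrier_mat n k. (\<forall>j<k. A $$ (0, j) = 0) \<and> R A}
      \<union> {A \<in> carrier_mat n k. \<not> (\<forall>j<k. A $$ (0, j) = 0) \<and> R A}" by auto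
  moreover have "finite {A \<in> carrier_mat n k. (\<forall>j<k. A $$ (0, j) = 0) \<and> R A}"
    by (rule finite_subset[OF _ finite_carrier_mat]) auto
  moreover have "finite {A \<in> carrier_mat n k. \<not> (\<forall>j<k. A $$ (0, j) = 0) \<and> R A}"
    by (rule finite_subset[OF _ finite_carrier_mat]) auto
  ultimately show ?thesis by (simp add: card_Un_disjoint disjoint_iff)
qed

lemma mu_rec:
  fixes ty :: "'a::{field,finite} itself"
  defines "Q \<equiv> real (card (UNIV :: 'a set))"
  shows "real (mu ty s a (Suc k)) = Q ^ s * real (mu ty s a k)
     + (if s = 0 then 0 else (Q ^ a - Q ^ (s - 1)) * real (mu ty (s - 1) a k))"
proof -
  let ?C = "carrier_mat a k :: 'a mat set"
  have fC: "finite ?C" by (rule finite_carrier_mat)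
  have "real (mu ty s a (Suc k)) = (\<Sum>A\<in>?C. real (card {c \<in> carrier_vec a. vec_space.rank a (joinc c A) = s}))"
    unfolding mu_def using count_join[where 'a='a, of a k "\<lambda>M. vec_space.rank a M = s"] by simp
  also have "\<dots> = (\<Sum>A\<in>?C. (if vec_space.rank a A = s then Q ^ s else 0)
        + (if vec_space.rank a A + 1 = s then Q ^ a - Q ^ (s - 1) else 0))"
  proof (rule sum.cong[OF refl])
    fix A assume A: "A \<in> ?C"
    show "real (card {c \<in> carrier_vec a. vec_space.rank a (joinc c A) = s})
      = (if vec_space.rank a A = s then Q ^ s else 0)
        + (if vec_space.rank a A + 1 = s then Q ^ a - Q ^ (s - 1) else 0)"
      using fiber_mu[OF A, of s] unfolding Q_def by auto
  qed
  also have "\<dots> = real (card {A\<in>?C. vec_space.rank a A = s}) * Q ^ s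
      + real (card {A\<in>?C. vec_space.rank a A + 1 = s}) * (Q ^ a - Q ^ (s - 1))"
    by (simp add: sum.distrib sum_if_card[OF fC])
  also have "\<dots> = Q ^ s * real (mu ty s a k)
     + (if s = 0 then 0 else (Q ^ a - Q ^ (s - 1)) * real (mu ty (s - 1) a k))"
  proof (cases s)
    case 0
    then show ?thesis by (simp add: mu_def)
  next
    case (Suc s')
    then have "{A\<in>?C. vec_space.rank a A + 1 = s} = {A\<in>?C. vec_space.rank a A = s - 1}" by auto
    then show ?thesis using Suc by (simp add: mu_def)
  qed
  finally show ?thesis .
qed

lemma mu_base:
  fixes ty :: "'a::{field,finite} itself"
  shows "mu ty s a 0 = (if s = 0 then 1 else 0)"
proof -
  have C: "carrier_mat a 0 = {mat a 0 (\<lambda>_. undefined) :: 'a mat}" by (auto intro: eq_matI)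
  have "vec_space.rank a (mat a 0 (\<lambda>_. undefined) :: 'a mat) \<le> 0"
    by (rule vec_space.rank_le_nc) auto
  then have r0: "vec_space.rank a (mat a 0 (\<lambda>_. undefined) :: 'a mat) = 0" by simp
  have eq: "{M :: 'a mat. M \<in> carrier_mat a 0 \<and> vec_space.rank a M = s} = (if s = 0 then {mat a 0 (\<lambda>_. undefined)} else {})"
    unfolding C using r0 by auto
  show ?thesis unfolding mu_def eq by simp
qed

definition G :: "real \<Rightarrow> nat \<Rightarrow> nat \<Rightarrow> nat \<Rightarrow> real" where
  "G Q a b s = (\<Prod>i<s. (Q ^ a - Q ^ i) * (Q ^ b - Q ^ i)) / (\<Prod>i<s. (Q ^ s - Q ^ i))"

lemma G_alg:
  fixes X Y D p Q Qa Qb :: real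
  assumes "D \<noteq> 0" "p \<noteq> 0" "Q * p - 1 \<noteq> 0"
  shows "X * (Qa - p) * ((Q * Qb - 1) * p * Y) / ((Q * p - 1) * p * D)
    = Q * p * (X * (Qa - p) * (Y * (Qb - p)) / ((Q * p - 1) * p * D)) + (Qa - p) * (X * Y / D)"
  using assms by (simp add: field_simps)

lemma prod_shift:
  fixes Q :: real
  shows "(\<Prod>i<Suc s. (Q ^ Suc b - Q ^ i)) = (Q ^ Suc b - 1) * Q ^ s * (\<Prod>i<s. (Q ^ b - Q ^ i))"
proof -
  have "(\<Prod>i<Suc s. (Q ^ Suc b - Q ^ i)) = (Q ^ Suc b - 1) * (\<Prod>i<s. (Q ^ Suc b - Q ^ Suc i))"
    by (simp only: prod.lessThan_Suc_shift power_0)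
  also have "(\<Prod>i<s. (Q ^ Suc b - Q ^ Suc i)) = (\<Prod>i<s. Q * (Q ^ b - Q ^ i))"
    by (rule prod.cong) (auto simp: algebra_simps)
  also have "\<dots> = Q ^ s * (\<Prod>i<s. (Q ^ b - Q ^ i))" by (simp add: prod.distrib)
  finally show ?thesis by simp
qed

lemma D_nz:
  fixes Q :: real
  assumes "Q > 1"
  shows "(\<Prod>i<s. (Q ^ s - Q ^ i)) \<noteq> 0"
proof -
  have "Q ^ s - Q ^ i \<noteq> 0" if "i < s" for i
    using power_strict_increasing[OF that assms] by simp
  then show ?thesis by (simp add: prod_zero_iff)
qed

lemma G_rec:
  fixes Q :: real
  assumes Q: "Q > 1"
  shows "G Q a (Suc b) (Suc s) = Q ^ Suc s * G Q a b (Suc s) + (Q ^ a - Q ^ s) * G Q a b s"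
proof -
  define X where "X = (\<Prod>i<s. (Q ^ a - Q ^ i))"
  define Y where "Y = (\<Prod>i<s. (Q ^ b - Q ^ i))"
  define D where "D = (\<Prod>i<s. (Q ^ s - Q ^ i))"
  define p where "p = Q ^ s"
  have Dnz: "D \<noteq> 0" unfolding D_def using D_nz[OF Q] .
  have pnz: "p \<noteq> 0" unfolding p_def using Q by simp
  have qp: "Q * p - 1 \<noteq> 0" unfolding p_def using Q
    by (metis less_numeral_extra(4) one_less_power power_Suc right_minus_eq zero_less_Suc)
  have D1: "(\<Prod>i<Suc s. (Q ^ Suc s - Q ^ i)) = (Q * p - 1) * p * D"
    unfolding prod_shift D_def p_def by simp
  have P1: "(\<Prod>i<Suc s. (Q ^ a - Q ^ i)) = X * (Q ^ a - p)" by (simp add: X_def p_def)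
  have P2: "(\<Prod>i<Suc s. (Q ^ Suc b - Q ^ i)) = (Q * Q ^ b - 1) * p * Y"
    unfolding prod_shift Y_def p_def by simp
  have GaSb: "G Q a (Suc b) (Suc s) = X * (Q ^ a - p) * ((Q * Q ^ b - 1) * p * Y) / ((Q * p - 1) * p * D)"
    unfolding G_def prod.distrib D1 P1 P2 by (rule refl)
  have Gab1: "G Q a b (Suc s) = X * (Q ^ a - p) * (Y * (Q ^ b - p)) / ((Q * p - 1) * p * D)"
  proof -
    have "(\<Prod>i<Suc s. (Q ^ a - Q ^ i) * (Q ^ b - Q ^ i)) = X * (Q ^ a - p) * (Y * (Q ^ b - p))"
      unfolding prod.distrib X_def Y_def p_def by simp
    then show ?thesis unfolding G_def D1 by simp
  qed
  have Gab: "G Q a b s = X * Y / D" unfolding G_def X_def Y_def D_def prod.distrib by simp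
  show ?thesis unfolding GaSb Gab1 Gab power_Suc p_def[symmetric]
    using G_alg[OF Dnz pnz qp] by simp
qed

lemma G_0: "G Q a b 0 = 1" by (simp add: G_def)

lemma G_b0:
  fixes Q :: real
  shows "G Q a 0 (Suc s) = 0"
  by (auto simp: G_def prod_zero_iff intro!: bexI[of _ 0])

lemma G_sym: "G Q a b s = G Q b a s"
  unfolding G_def by (simp add: mult.commute)

lemma mu_closed:
  fixes ty :: "'a::{field,finite} itself"
  defines "Q \<equiv> real (card (UNIV :: 'a set))"
  shows "real (mu ty s a b) = G Q a b s"
proof (induct b arbitrary: s)
  case 0
  then show ?case by (cases s) (simp_all add: mu_base G_0 G_b0)
next
  case (Suc b)
  have Q1: "Q > 1" unfolding Q_def using card_UNIV_ge2[where 'a='a] by simp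
  show ?case
  proof (cases s)
    case 0
    then show ?thesis using mu_rec[of ty 0 a b] Suc[of 0] by (simp add: G_0 Q_def)
  next
    case (Suc s')
    then show ?thesis using mu_rec[of ty s a b] Suc.hyps[of s] Suc.hyps[of s'] G_rec[OF Q1, of a b s']
      by (simp add: Q_def)
  qed
qed

lemma mu_row_rec:
  fixes ty :: "'a::{field,finite} itself"
  defines "Q \<equiv> real (card (UNIV :: 'a set))"
  shows "real (mu ty (Suc s) (Suc a) b) = Q ^ Suc s * real (mu ty (Suc s) a b) + (Q ^ b - Q ^ s) * real (mu ty s a b)"
proof -
  have Q1: "Q > 1" unfolding Q_def using card_UNIV_ge2[where 'a='a] by simp
  show ?thesis unfolding mu_closed[where 'a='a] Q_def[symmetric]
    using G_rec[OF Q1, of b a s] by (simp add: G_sym)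
qed

lemma mu_col_rec:
  fixes ty :: "'a::{field,finite} itself"
  defines "Q \<equiv> real (card (UNIV :: 'a set))"
  shows "real (mu ty (Suc s) a (Suc b)) = Q ^ Suc s * real (mu ty (Suc s) a b) + (Q ^ a - Q ^ s) * real (mu ty s a b)"
  using mu_rec[of ty "Suc s" a b] unfolding Q_def by simp

lemma mu_0: "mu (ty :: 'a::{field,finite} itself) 0 a b = 1"
proof -
  have "real (mu ty 0 a b) = 1" using mu_closed[of ty 0 a b] by (simp add: G_0)
  then show ?thesis by simp
qed

definition sig :: "nat \<Rightarrow> 'a::field mat \<Rightarrow> 'a" where
  "sig r A = (\<Sum>i<r - 1. A $$ (Suc i, i))"

lemma tau_joinc:
  assumes A: "A \<in> carrier_mat l k" and r: "1 \<le> r" "r \<le> l" "r \<le> Suc k"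
  shows "tau r (joinc c A) = c $ 0 + sig r A"
proof -
  obtain r' where r': "r = Suc r'" using r by (cases r) auto
  have "tau r (joinc c A) = joinc c A $$ (0, 0) + (\<Sum>i<r'. joinc c A $$ (Suc i, Suc i))"
    unfolding tau_def r' by (simp only: sum.lessThan_Suc_shift)
  also have "joinc c A $$ (0, 0) = c $ 0" using A r r' by (simp add: joinc_def)
  also have "(\<Sum>i<r'. joinc c A $$ (Suc i, Suc i)) = (\<Sum>i<r'. A $$ (Suc i, i))"
    by (rule sum.cong) (use A r r' in \<open>auto simp: joinc_def\<close>)
  finally show ?thesis unfolding sig_def r' by simp
qed

lemma sig_addz:
  assumes N: "N \<in> carrier_mat n k" and r: "1 \<le> r" "r \<le> Suc n" "r \<le> Suc k"
  shows "sig r (addz N) = tau (r - 1) N"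
  unfolding sig_def tau_def
  by (rule sum.cong) (use N r in \<open>auto simp: addz_def\<close>)

lemma Sp_zero: "set ws \<subseteq> carrier_vec n \<Longrightarrow> 0\<^sub>v n \<in> Sp n (ws :: 'a::{field,finite} vec list)"
proof (induct ws)
  case Nil
  then show ?case by (simp add: Sp_Nil)
next
  case (Cons c ws)
  then have ws: "set ws \<subseteq> carrier_vec n" and c: "c \<in> carrier_vec n" by auto
  have e: "0\<^sub>v n = (\<lambda>(a,y). a \<cdot>\<^sub>v c + y) ((0::'a), 0\<^sub>v n)" using c by (intro eq_vecI) auto
  have mem: "((0::'a), 0\<^sub>v n) \<in> UNIV \<times> Sp n ws" using Cons ws by auto
  show ?case unfolding Sp_Cons[OF ws c]
    using image_eqI[of "0\<^sub>v n" "\<lambda>(a,y). a \<cdot>\<^sub>v c + y" "((0::'a), 0\<^sub>v n)" "UNIV \<times> Sp n ws"] e mem by blast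
qed

lemma rank0_tau:
  fixes N :: "'a::{field,finite} mat"
  assumes N: "N \<in> carrier_mat n k" and r0: "vec_space.rank n N = 0" and r: "r \<le> n" "r \<le> k"
  shows "tau r N = 0"
proof -
  have ws: "set (cols N) \<subseteq> carrier_vec n" by (rule cols_carrier[OF N])
  have "card (Sp n (cols N)) = 1" using card_Sp_rank[OF N] r0 by simp
  then obtain x where x: "Sp n (cols N) = {x}" by (rule card_1_singletonE)
  have z: "Sp n (cols N) = {0\<^sub>v n}" using x Sp_zero[OF ws] by auto
  have "N $$ (i, j) = 0" if "i < n" "j < k" for i j
  proof -
    have "col N j \<in> set (cols N)" using N that by (simp add: cols_def)
    then have "col N j = 0\<^sub>v n" using Sp_own[OF ws] z by auto
    then have "col N j $ i = 0" using that by simp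
    then show ?thesis using N that by simp
  qed
  then show ?thesis unfolding tau_def using r by (intro sum.neutral) auto
qed

lemma frak_w_0:
  fixes ty :: "'a::{field,finite} itself"
  assumes "r \<le> n" "r \<le> k"
  shows "frak_w ty r 0 n k = 0"
proof -
  have eq: "{M :: 'a mat. M \<in> carrier_mat n k \<and> vec_space.rank n M = 0 \<and> tau r M \<noteq> 0} = {}"
    using rank0_tau[where 'a='a, OF _ _ assms] by auto
  show ?thesis unfolding frak_w_def eq by simp
qed

lemma per_A:
  fixes A :: "'a::{field,finite} mat"
  assumes A: "A \<in> carrier_mat (Suc n) k" and t: "1 \<le> t"
  defines "Q \<equiv> real (card (UNIV :: 'a set))" and "s \<equiv> vec_space.rank (Suc n) A"
    and "Z \<equiv> (\<forall>j<k. A $$ (0, j) = 0)"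
  shows "real (card {c \<in> carrier_vec (Suc n). vec_space.rank (Suc n) (joinc c A) = t \<and> c $ 0 \<noteq> - sig r A})
    = (if \<not> Z \<and> s = t then Q ^ t - Q ^ t / Q else 0)
    + (if Z \<and> s = t \<and> sig r A \<noteq> 0 then Q ^ t else 0)
    + (if \<not> Z \<and> s = t - 1 then Q ^ Suc n - Q ^ (t - 1) - Q ^ n + Q ^ (t - 1) / Q else 0)
    + (if Z \<and> s = t - 1 then Q ^ Suc n - Q ^ n else 0)
    + (if Z \<and> s = t - 1 \<and> sig r A \<noteq> 0 then - (Q ^ (t - 1)) else 0)"
proof -
  let ?S = "Sp (Suc n) (cols A)"
  let ?E = "real (card {c \<in> ?S. c $ 0 = - sig r A})"
  have Qpos: "Q > 0" unfolding Q_def using card_UNIV_ge2[where 'a='a] by simp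
  have cS: "card ?S = card (UNIV :: 'a set) ^ s" unfolding s_def by (rule card_Sp_rank[OF A])
  have E: "?E = (if Z then (if sig r A = 0 then Q ^ s else 0) else Q ^ s / Q)"
  proof (cases Z)
    case True
    have "{c \<in> ?S. c $ 0 = - sig r A} = (if - sig r A = 0 then ?S else {})"
      by (rule Z_fiber[OF A _ True[unfolded Z_def]]) simp
    then show ?thesis using True cS unfolding Q_def by simp
  next
    case False
    then obtain j where j: "j < k" "A $$ (0, j) \<noteq> 0" unfolding Z_def by auto
    have "card {c \<in> ?S. c $ 0 = - sig r A} * card (UNIV :: 'a set) = card ?S"
      by (rule NZ_fiber[OF A _ j]) simp
    then have "?E * Q = Q ^ s" unfolding Q_def using cS by (metis of_nat_mult of_nat_power)
    then have "?E = Q ^ s / Q" using Qpos by (simp add: field_simps)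
    then show ?thesis using False by simp
  qed
  have F: "real (card {c \<in> carrier_vec (Suc n). vec_space.rank (Suc n) (joinc c A) = t \<and> c $ 0 \<noteq> - sig r A})
     = (if s = t then Q ^ s - ?E else 0) + (if s + 1 = t then Q ^ Suc n - Q ^ s - Q ^ (Suc n - 1) + ?E else 0)"
    using fiber_main[OF A, of t "- sig r A"] unfolding Q_def s_def by simp
  show ?thesis unfolding F E using t by auto
qed

lemma main_sum:
  fixes ty :: "'a::{field,finite} itself"
  assumes r: "1 \<le> r" "r \<le> Suc n" "r \<le> Suc k" and t: "1 \<le> t"
  defines "Q \<equiv> real (card (UNIV :: 'a set))"
  shows "real (frak_w ty r t (Suc n) (Suc k)) =
      real (card {A \<in> (carrier_mat (Suc n) k :: 'a mat set). \<not> (\<forall>j<k. A $$ (0, j) = 0) \<and> vec_space.rank (Suc n) A = t}) * (Q ^ t - Q ^ t / Q)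
    + real (card {A \<in> (carrier_mat (Suc n) k :: 'a mat set). (\<forall>j<k. A $$ (0, j) = 0) \<and> vec_space.rank (Suc n) A = t \<and> sig r A \<noteq> 0}) * Q ^ t
    + real (card {A \<in> (carrier_mat (Suc n) k :: 'a mat set). \<not> (\<forall>j<k. A $$ (0, j) = 0) \<and> vec_space.rank (Suc n) A = t - 1})
        * (Q ^ Suc n - Q ^ (t - 1) - Q ^ n + Q ^ (t - 1) / Q)
    + real (card {A \<in> (carrier_mat (Suc n) k :: 'a mat set). (\<forall>j<k. A $$ (0, j) = 0) \<and> vec_space.rank (Suc n) A = t - 1}) * (Q ^ Suc n - Q ^ n)
    + real (card {A \<in> (carrier_mat (Suc n) k :: 'a mat set). (\<forall>j<k. A $$ (0, j) = 0) \<and> vec_space.rank (Suc n) A = t - 1 \<and> sig r A \<noteq> 0}) * (- (Q ^ (t - 1)))" (is "_ = ?rhs")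
proof -
  let ?C = "carrier_mat (Suc n) k :: 'a mat set"
  have fC: "finite ?C" by (rule finite_carrier_mat)
  have "real (frak_w ty r t (Suc n) (Suc k)) =
     (\<Sum>A\<in>?C. real (card {c \<in> carrier_vec (Suc n). vec_space.rank (Suc n) (joinc c A) = t \<and> tau r (joinc c A) \<noteq> 0}))"
    unfolding frak_w_def using count_join[where 'a='a, of "Suc n" k "\<lambda>M. vec_space.rank (Suc n) M = t \<and> tau r M \<noteq> 0"]
    by simp
  also have "\<dots> = (\<Sum>A\<in>?C.
      (if \<not> (\<forall>j<k. A $$ (0, j) = 0) \<and> vec_space.rank (Suc n) A = t then Q ^ t - Q ^ t / Q else 0)
    + (if (\<forall>j<k. A $$ (0, j) = 0) \<and> vec_space.rank (Suc n) A = t \<and> sig r A \<noteq> 0 then Q ^ t else 0)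
    + (if \<not> (\<forall>j<k. A $$ (0, j) = 0) \<and> vec_space.rank (Suc n) A = t - 1 then Q ^ Suc n - Q ^ (t - 1) - Q ^ n + Q ^ (t - 1) / Q else 0)
    + (if (\<forall>j<k. A $$ (0, j) = 0) \<and> vec_space.rank (Suc n) A = t - 1 then Q ^ Suc n - Q ^ n else 0)
    + (if (\<forall>j<k. A $$ (0, j) = 0) \<and> vec_space.rank (Suc n) A = t - 1 \<and> sig r A \<noteq> 0 then - (Q ^ (t - 1)) else 0))"
    apply (rule sum.cong[OF refl])
    subgoal premises A for A
    proof -
      have eq: "{c \<in> carrier_vec (Suc n). vec_space.rank (Suc n) (joinc c A) = t \<and> tau r (joinc c A) \<noteq> 0}
        = {c \<in> carrier_vec (Suc n). vec_space.rank (Suc n) (joinc c A) = t \<and> c $ 0 \<noteq> - sig r A}"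
        using tau_joinc[OF A r] by (auto simp: eq_neg_iff_add_eq_0)
      show ?thesis unfolding eq using per_A[OF A t, of r] unfolding Q_def by simp
    qed
    done
  also have "\<dots> = ?rhs"
    by (simp only: sum.distrib sum_if_card[OF fC])
  finally show ?thesis .
qed

lemma c_Z:
  fixes ty :: "'a::{field,finite} itself"
  shows "card {A \<in> (carrier_mat (Suc n) k :: 'a mat set). (\<forall>j<k. A $$ (0, j) = 0) \<and> vec_space.rank (Suc n) A = s}
    = mu ty s n k"
  using count_Z[where 'a='a, of n k s "\<lambda>_. True"] unfolding mu_def by simp

lemma c_W:
  fixes ty :: "'a::{field,finite} itself"
  assumes r: "1 \<le> r" "r \<le> Suc n" "r \<le> Suc k"
  shows "card {A \<in> (carrier_mat (Suc n) k :: 'a mat set). (\<forall>j<k. A $$ (0, j) = 0) \<and> vec_space.rank (Suc n) A = s \<and> sig r A \<noteq> 0}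
    = frak_w ty (r - 1) s n k"
proof -
  have "{N \<in> (carrier_mat n k :: 'a mat set). vec_space.rank n N = s \<and> sig r (addz N) \<noteq> 0}
      = {N :: 'a mat. N \<in> carrier_mat n k \<and> vec_space.rank n N = s \<and> tau (r - 1) N \<noteq> 0}"
    using sig_addz[where 'a='a, OF _ r] by auto
  then show ?thesis using count_Z[where 'a='a, of n k s "\<lambda>A. sig r A \<noteq> 0"] unfolding frak_w_def by simp
qed

lemma c_NZ:
  fixes ty :: "'a::{field,finite} itself"
  shows "real (card {A \<in> (carrier_mat (Suc n) k :: 'a mat set). \<not> (\<forall>j<k. A $$ (0, j) = 0) \<and> vec_space.rank (Suc n) A = s})
    = real (mu ty s (Suc n) k) - real (mu ty s n k)"
proof -
  have "mu ty s (Suc n) k = mu ty s n k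
     + card {A \<in> (carrier_mat (Suc n) k :: 'a mat set). \<not> (\<forall>j<k. A $$ (0, j) = 0) \<and> vec_space.rank (Suc n) A = s}"
    using count_split[where 'a='a, of "Suc n" k "\<lambda>A. vec_space.rank (Suc n) A = s"] c_Z[of n k s ty]
    unfolding mu_def by simp
  then show ?thesis by simp
qed

lemma alg2:
  fixes Q a b c z2 z1 z0 w2 w1 :: real
  assumes "Q \<noteq> 0" "Q - 1 \<noteq> 0"
  shows "((Q*Q*a*z2 + (c - Q*a)*z1 - z2) * (Q*Q*a - Q*Q*a/Q) + w2*(Q*Q*a) + (Q*a*z1 + (c - a)*z0 - z1) * (Q*b - Q*a - b + Q*a/Q) + z1*(Q*b - b) + w1*(-(Q*a))) / (Q - 1)
 = Q*Q*a*(w2/(Q-1)) + Q*a*(Q*Q*a*z2 + (b - Q*a)*z1 - z2) - (Q*a*(w1/(Q-1)) + a*(Q*a*z1 + (b-a)*z0 - z1)) + c*(Q*a*z1 + (b - a)*z0)"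
proof -
  have e1: "Q*Q*a/Q = Q*a" "Q*a/Q = a" using assms by auto
  define v2 where "v2 = w2 / (Q - 1)"
  define v1 where "v1 = w1 / (Q - 1)"
  have w: "w2 = v2 * (Q - 1)" "w1 = v1 * (Q - 1)" using assms by (auto simp: v2_def v1_def)
  have X: "(Q*Q*a*z2 + (c - Q*a)*z1 - z2) * (Q*Q*a - Q*a) + (v2 * (Q - 1))*(Q*Q*a) + (Q*a*z1 + (c - a)*z0 - z1) * (Q*b - Q*a - b + a) + z1*(Q*b - b) + (v1 * (Q - 1))*(-(Q*a))
    = (Q - 1) * (Q*Q*a*v2 + Q*a*(Q*Q*a*z2 + (b - Q*a)*z1 - z2) - (Q*a*v1 + a*(Q*a*z1 + (b-a)*z0 - z1)) + c*(Q*a*z1 + (b - a)*z0))"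
    by (simp add: algebra_simps)
  show ?thesis unfolding e1 w(1) w(2)[THEN sym, THEN sym] unfolding v2_def[symmetric] v1_def[symmetric]
    using X assms by (simp add: w)
qed

lemma final_alg2:
  fixes Q :: real and u n k :: nat and M N Z W :: "nat \<Rightarrow> real"
  assumes Q: "Q > 1"
    and Mt: "M (Suc (Suc u)) = Q ^ Suc (Suc u) * Z (Suc (Suc u)) + (Q ^ k - Q ^ Suc u) * Z (Suc u)"
    and Mt1: "M (Suc u) = Q ^ Suc u * Z (Suc u) + (Q ^ k - Q ^ u) * Z u"
    and Nt: "N (Suc (Suc u)) = Q ^ Suc (Suc u) * Z (Suc (Suc u)) + (Q ^ n - Q ^ Suc u) * Z (Suc u)"
    and Nt1: "N (Suc u) = Q ^ Suc u * Z (Suc u) + (Q ^ n - Q ^ u) * Z u"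
  defines "t \<equiv> Suc (Suc u)"
  shows "((M t - Z t) * (Q ^ t - Q ^ t / Q) + W t * Q ^ t
      + (M (t - 1) - Z (t - 1)) * (Q ^ Suc n - Q ^ (t - 1) - Q ^ n + Q ^ (t - 1) / Q)
      + Z (t - 1) * (Q ^ Suc n - Q ^ n) + W (t - 1) * (- (Q ^ (t - 1)))) / (Q - 1)
    = Q ^ t * (W t / (Q - 1)) + Q powi (int t - 1) * (N t - Z t)
      - (Q ^ (t - 1) * (W (t - 1) / (Q - 1)) + Q powi (int (t - 1) - 1) * (N (t - 1) - Z (t - 1)))
      + Q ^ k * N (t - 1)"
proof -
  have Qne: "Q \<noteq> 0" "Q - 1 \<noteq> 0" using Q by auto
  have t1: "t - 1 = Suc u" unfolding t_def by simp
  have p1: "Q powi (int t - 1) = Q * Q ^ u" unfolding t_def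
  proof -
    have "int (Suc (Suc u)) - 1 = int (Suc u)" by simp
    then show "Q powi (int (Suc (Suc u)) - 1) = Q * Q ^ u" by (simp only: power_int_of_nat power_Suc)
  qed
  have p2: "Q powi (int (t - 1) - 1) = Q ^ u" unfolding t1
  proof -
    have "int (Suc u) - 1 = int u" by simp
    then show "Q powi (int (Suc u) - 1) = Q ^ u" by (simp only: power_int_of_nat)
  qed
  have q1: "Q ^ t = Q * Q * Q ^ u" "Q ^ Suc u = Q * Q ^ u" "Q ^ Suc n = Q * Q ^ n" unfolding t_def by simp_all
  show ?thesis unfolding p1 p2 unfolding t1 unfolding t_def[symmetric] Mt[folded t_def] Nt[folded t_def] Mt1 Nt1
    unfolding q1
    by (rule alg2[OF Qne])
qed

lemma final_alg1:
  fixes Q :: real and n k :: nat and M N Z W :: "nat \<Rightarrow> real"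
  assumes Q: "Q > 1"
    and Z0: "Z 0 = 1" "M 0 = 1" "N 0 = 1" "W 0 = 0"
    and M1: "M (Suc 0) = Q * Z (Suc 0) + (Q ^ k - 1) * Z 0"
    and N1: "N (Suc 0) = Q * Z (Suc 0) + (Q ^ n - 1) * Z 0"
  defines "t \<equiv> Suc 0"
  shows "((M t - Z t) * (Q ^ t - Q ^ t / Q) + W t * Q ^ t
      + (M (t - 1) - Z (t - 1)) * (Q ^ Suc n - Q ^ (t - 1) - Q ^ n + Q ^ (t - 1) / Q)
      + Z (t - 1) * (Q ^ Suc n - Q ^ n) + W (t - 1) * (- (Q ^ (t - 1)))) / (Q - 1)
    = Q ^ t * (W t / (Q - 1)) + Q powi (int t - 1) * (N t - Z t)
      - (Q ^ (t - 1) * (W (t - 1) / (Q - 1)) + Q powi (int (t - 1) - 1) * (N (t - 1) - Z (t - 1)))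
      + Q ^ k * N (t - 1)"
proof -
  have Qne: "Q \<noteq> 0" "Q - 1 \<noteq> 0" using Q by auto
  define v where "v = W (Suc 0) / (Q - 1)"
  have w: "W (Suc 0) = v * (Q - 1)" using Qne by (simp add: v_def)
  have X: "(Q * Z (Suc 0) + (Q ^ k - 1) - Z (Suc 0)) * (Q - 1) + v * (Q - 1) * Q + Q * Q ^ n - Q ^ n
     = (Q - 1) * (Q * v + (Q * Z (Suc 0) + (Q ^ n - 1) - Z (Suc 0)) + Q ^ k)"
    by (simp add: algebra_simps)
  show ?thesis unfolding t_def using Z0 Qne unfolding M1 N1
    by (simp add: field_simps)
qed

theorem mainTheorem3:
  fixes ty :: "'a::{field,finite} itself" and r t l m :: nat
  assumes "1 \<le> r" and "r \<le> l" and "l \<le> m" and "1 \<le> t" and "t < l"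
  shows "hat_w ty r t l m =
           A_term ty l m r t - A_term ty l m r (t - 1)
           + real (card (UNIV :: 'a set)) ^ (m - 1) * real (mu ty (t - 1) (l - 1) m)"
proof -
  obtain n where l: "l = Suc n" using assms by (cases l) auto
  obtain k where m: "m = Suc k" using assms by (cases m) auto
  have r1: "r \<le> Suc n" "r \<le> Suc k" using assms l m by auto
  have r2: "r - 1 \<le> n" "r - 1 \<le> k" using r1 by auto
  define Q where "Q = real (card (UNIV :: 'a set))"
  have Q1: "Q > 1" unfolding Q_def using card_UNIV_ge2[where 'a='a] by simp
  define Z where "Z s = real (mu ty s n k)" for s
  define M where "M s = real (mu ty s (Suc n) k)" for s
  define N where "N s = real (mu ty s n (Suc k))" for s
  define W where "W s = real (frak_w ty (r - 1) s n k)" for s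
  have S: "real (frak_w ty r t (Suc n) (Suc k)) = (M t - Z t) * (Q ^ t - Q ^ t / Q) + W t * Q ^ t
      + (M (t - 1) - Z (t - 1)) * (Q ^ Suc n - Q ^ (t - 1) - Q ^ n + Q ^ (t - 1) / Q)
      + Z (t - 1) * (Q ^ Suc n - Q ^ n) + W (t - 1) * (- (Q ^ (t - 1)))"
    using main_sum[OF assms(1) r1 assms(4), of ty] unfolding c_NZ[where ty=ty] c_Z[where ty=ty] c_W[where ty=ty, OF assms(1) r1]
    unfolding Q_def M_def Z_def W_def by simp
  have LHS: "hat_w ty r t l m = real (frak_w ty r t (Suc n) (Suc k)) / (Q - 1)"
    unfolding hat_w_def l m Q_def by simp
  have RHS: "A_term ty l m r s = Q ^ s * (W s / (Q - 1)) + Q powi (int s - 1) * (N s - Z s)" for s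
    unfolding A_term_def hat_w_def l m W_def N_def Z_def Q_def by simp
  have last: "real (card (UNIV :: 'a set)) ^ (m - 1) * real (mu ty (t - 1) (l - 1) m) = Q ^ k * N (t - 1)"
    unfolding l m Q_def N_def by simp
  have Qne: "Q \<noteq> 0" "Q - 1 \<noteq> 0" using Q1 by auto
  show ?thesis
  proof (cases t)
    case 0
    then show ?thesis using assms by simp
  next
    case (Suc t')
    show ?thesis
    proof (cases t')
      case 0
      have t1: "t = Suc 0" using Suc 0 by simp
      have Z0: "Z 0 = 1" "M 0 = 1" "N 0 = 1" unfolding Z_def M_def N_def by (simp_all add: mu_0)
      have W0: "W 0 = 0" unfolding W_def using frak_w_0[OF r2] by simp
      have M1: "M (Suc 0) = Q * Z (Suc 0) + (Q ^ k - 1) * Z 0"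
        using mu_row_rec[of ty 0 n k] unfolding M_def Z_def Q_def by simp
      have N1: "N (Suc 0) = Q * Z (Suc 0) + (Q ^ n - 1) * Z 0"
        using mu_col_rec[of ty 0 n k] unfolding N_def Z_def Q_def by simp
      show ?thesis unfolding LHS RHS last unfolding S unfolding t1
        by (rule final_alg1[where Q=Q and M=M and N=N and Z=Z and W=W and k=k and n=n, OF Q1 Z0 W0 M1 N1])
    next
      case (Suc u)
      have t2: "t = Suc (Suc u)" using \<open>t = Suc t'\<close> Suc by simp
      have Mt: "M (Suc (Suc u)) = Q ^ Suc (Suc u) * Z (Suc (Suc u)) + (Q ^ k - Q ^ Suc u) * Z (Suc u)"
        using mu_row_rec[of ty "Suc u" n k] unfolding M_def Z_def Q_def by simp
      have Mt1: "M (Suc u) = Q ^ Suc u * Z (Suc u) + (Q ^ k - Q ^ u) * Z u"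
        using mu_row_rec[of ty u n k] unfolding M_def Z_def Q_def by simp
      have Nt: "N (Suc (Suc u)) = Q ^ Suc (Suc u) * Z (Suc (Suc u)) + (Q ^ n - Q ^ Suc u) * Z (Suc u)"
        using mu_col_rec[of ty "Suc u" n k] unfolding N_def Z_def Q_def by simp
      have Nt1: "N (Suc u) = Q ^ Suc u * Z (Suc u) + (Q ^ n - Q ^ u) * Z u"
        using mu_col_rec[of ty u n k] unfolding N_def Z_def Q_def by simp
      show ?thesis unfolding LHS RHS last unfolding S unfolding t2
        by (rule final_alg2[where Q=Q and M=M and N=N and Z=Z and W=W and k=k and n=n and u=u, OF Q1 Mt Mt1 Nt Nt1])
    qed
  qed
qed

end
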